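(* Suppose there exists a Whitney-maximum graph in $\mathcal{C}_{n,m}$. Then every uniformly most reliable graph in $\mathcal{C}_{n,m}$ is a $0$-element in $\mathcal{C}_{n,m}$.
   Context: $\mathcal{C}_{n,m}$ denotes the set of all connected simple graphs on $n$ vertices and $m$ edges. For a graph $G$ with vertex set $V$, $\kappa(G)$ is its number of connected components, $r(G)=|V|-\kappa(G)$, $c(G)=|E(G)|-|V|+\kappa(G)$. $\mathcal{S}(G)$ is the set of all spanning subgraphs of $G$. The Whitney polynomial is $W_G(x,y)=\sum_{H\in\mathcal{S}(G)}x^{r(G)-r(H)}y^{c(H)}$. A bivariate polynomial is nonnegative if all its coefficients are nonnegative real numbers. $G\in\mathcal{C}_{n,m}$ is Whitney-maximum if for every $H\in\mathcal{C}_{n,m}$ there is a nonnegative polynomial $Q_H$ with $W_G(x,y)-W_H(x,y)=(1-xy)Q_H(x,y)$. $N_i^{(1)}(G)$ is the number of connected spanning subgraphs of $G$ with exactly $i$ edges, and $R_G^{(1)}(p)=\sum_{i=0}^m N_i^{(1)}(G)p^i(1-p)^{m-i}$. A graph $G\in\mathcal{C}_{n,m}$ is uniformly most reliable if $R_G^{(1)}(p)\ge R_H^{(1)}(p)$ for all $H\in\mathcal{C}_{n,m}$ and $p\in[0,1]$. $G\in\mathcal{C}_{n,m}$ is a $0$-element in $\mathcal{C}_{n,m}$ if $N_i^{(1)}(G)\ge N_i^{(1)}(H)$ for all $i\in\{0,\ldots,m\}$ and all $H\in\mathcal{C}_{n,m}$. *)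

theory Defs
  imports Complex_Main "HOL-Computational_Algebra.Polynomial"
begin

definition simple_graph :: "nat \<Rightarrow> nat set set \<Rightarrow> bool" where
  "simple_graph n E \<longleftrightarrow> E \<subseteq> {{u, v} | u v. u < n \<and> v < n \<and> u \<noteq> v}"

definition adj_rel :: "nat set set \<Rightarrow> (nat \<times> nat) set" where
  "adj_rel E = {(u, v). {u, v} \<in> E}"

definition reach_rel :: "nat \<Rightarrow> nat set set \<Rightarrow> (nat \<times> nat) set" where
  "reach_rel n E = Restr ((adj_rel E)\<^sup>*) {0..<n}"

definition num_comp :: "nat \<Rightarrow> nat set set \<Rightarrow> nat" where
  "num_comp n E = card ({0..<n} // reach_rel n E)"

definition connected_graph :: "nat \<Rightarrow> nat set set \<Rightarrow> bool" where
  "connected_graph n E \<longleftrightarrow> num_comp n E = 1"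

definition Cnm :: "nat \<Rightarrow> nat \<Rightarrow> nat set set set" where
  "Cnm n m = {E. simple_graph n E \<and> connected_graph n E \<and> card E = m}"

text \<open>rank r(G) = |V| - kappa(G), corank c(G) = |E| - |V| + kappa(G)
  (both are nonnegative, so nat arithmetic is exact)\<close>
definition grank :: "nat \<Rightarrow> nat set set \<Rightarrow> nat" where
  "grank n E = n - num_comp n E"

definition gcorank :: "nat \<Rightarrow> nat set set \<Rightarrow> nat" where
  "gcorank n E = card E + num_comp n E - n"

text \<open>Bivariate polynomials in x,y are represented as (real poly) poly:
  the outer variable is x, the inner variable (coefficients) is y.
  x^a y^b is  monom (monom 1 b) a.\<close>
definition whitney :: "nat \<Rightarrow> nat set set \<Rightarrow> real poly poly" where
  "whitney n E = (\<Sum>H\<in>Pow E. monom (monom 1 (gcorank n H)) (grank n E - grank n H))"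

definition one_minus_xy :: "real poly poly" where
  "one_minus_xy = 1 - monom (monom 1 1) 1"

definition nonneg_poly2 :: "real poly poly \<Rightarrow> bool" where
  "nonneg_poly2 Q \<longleftrightarrow> (\<forall>i j. coeff (coeff Q i) j \<ge> 0)"

definition whitney_maximum :: "nat \<Rightarrow> nat \<Rightarrow> nat set set \<Rightarrow> bool" where
  "whitney_maximum n m G \<longleftrightarrow> G \<in> Cnm n m \<and>
     (\<forall>H\<in>Cnm n m. \<exists>Q. nonneg_poly2 Q \<and> whitney n G - whitney n H = one_minus_xy * Q)"

definition Nconn :: "nat \<Rightarrow> nat set set \<Rightarrow> nat \<Rightarrow> nat" where
  "Nconn n E i = card {H. H \<subseteq> E \<and> card H = i \<and> connected_graph n H}"

definition rel1 :: "nat \<Rightarrow> nat set set \<Rightarrow> real \<Rightarrow> real" where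
  "rel1 n E p = (\<Sum>i=0..card E. real (Nconn n E i) * p ^ i * (1 - p) ^ (card E - i))"

definition uniformly_most_reliable :: "nat \<Rightarrow> nat \<Rightarrow> nat set set \<Rightarrow> bool" where
  "uniformly_most_reliable n m G \<longleftrightarrow> G \<in> Cnm n m \<and>
     (\<forall>H\<in>Cnm n m. \<forall>p::real. 0 \<le> p \<and> p \<le> 1 \<longrightarrow> rel1 n G p \<ge> rel1 n H p)"

definition zero_element :: "nat \<Rightarrow> nat \<Rightarrow> nat set set \<Rightarrow> bool" where
  "zero_element n m G \<longleftrightarrow> G \<in> Cnm n m \<and>
     (\<forall>H\<in>Cnm n m. \<forall>i\<in>{0..m}. Nconn n G i \<ge> Nconn n H i)"

end

theory Submission
  imports Defs
begin

lemma quot_img: "A // r = (\<lambda>x. r``{x}) ` A"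
  by (auto simp: quotient_def)

lemma adj_sym: "sym (adj_rel E)"
  by (auto simp: sym_def adj_rel_def insert_commute)

lemma adj_insert_sub: "\<exists>a b. adj_rel (insert e E) \<subseteq> adj_rel E \<union> {(a,b),(b,a)}"
proof (cases "\<exists>a b. {a,b} = e")
  case True
  then obtain a b where e: "e = {a,b}" by auto
  have "adj_rel (insert e E) \<subseteq> adj_rel E \<union> {(a,b),(b,a)}"
    unfolding adj_rel_def e by (auto simp: doubleton_eq_iff)
  then show ?thesis by blast
next
  case False
  then have "adj_rel (insert e E) \<subseteq> adj_rel E \<union> {(0,0),(0,0)}"
    unfolding adj_rel_def by auto
  then show ?thesis by blast
qed

lemma path_split:
  assumes sy: "sym r" and "(x,y) \<in> (r \<union> {(a,b),(b,a)})\<^sup>*"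
  shows "(x,y) \<in> r\<^sup>* \<or> ((x,a) \<in> r\<^sup>* \<and> (b,y) \<in> r\<^sup>*) \<or> ((x,b) \<in> r\<^sup>* \<and> (a,y) \<in> r\<^sup>*)"
  using assms(2)
proof (induction rule: rtrancl_induct)
  case base then show ?case by simp
next
  case (step y z)
  have S: "\<And>u v. (u,v) \<in> r\<^sup>* \<Longrightarrow> (v,u) \<in> r\<^sup>*" using sy by (simp add: sym_rtrancl symD)
  from step.hyps(2) consider "(y,z) \<in> r" | "y = a" "z = b" | "y = b" "z = a" by auto
  then show ?case
  proof cases
    case 1
    then have yz: "(y,z) \<in> r\<^sup>*" by simp
    from step.IH show ?thesis
      using rtrancl_trans[OF _ yz] by blast
  next
    case 2
    from step.IH show ?thesis
    proof (elim disjE conjE)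
      assume "(x,y) \<in> r\<^sup>*" then show ?thesis using 2 by simp
    next
      assume "(x,a) \<in> r\<^sup>*" then show ?thesis using 2 by simp
    next
      assume h: "(x,b) \<in> r\<^sup>*" "(a,y) \<in> r\<^sup>*"
      have "(b,b) \<in> r\<^sup>*" by simp
      then show ?thesis using 2 h by simp
    qed
  next
    case 3
    from step.IH show ?thesis
    proof (elim disjE conjE)
      assume "(x,y) \<in> r\<^sup>*" then show ?thesis using 3 by simp
    next
      assume h: "(x,a) \<in> r\<^sup>*" "(b,y) \<in> r\<^sup>*"
      then show ?thesis using 3 by simp
    next
      assume h: "(x,b) \<in> r\<^sup>*" "(a,y) \<in> r\<^sup>*"
      then show ?thesis using 3 by simp
    qed
  qed
qed

lemma card_merge:
  assumes fin: "finite A"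
    and H: "\<And>x y. x \<in> A \<Longrightarrow> y \<in> A \<Longrightarrow> g x = g y \<Longrightarrow> f x = f y \<or> {f x, f y} = {p, q}"
  shows "card (f ` A) \<le> card (g ` A) + 1"
proof -
  define A' where "A' = {x\<in>A. f x \<noteq> p}"
  have A'A: "A' \<subseteq> A" by (auto simp: A'_def)
  have eq: "f ` A' = (\<lambda>z. f (inv_into A' g z)) ` (g ` A')"
  proof -
    have "f x = f (inv_into A' g (g x))" if "x \<in> A'" for x
    proof -
      have i: "inv_into A' g (g x) \<in> A'" "g (inv_into A' g (g x)) = g x"
        using that by (auto intro: inv_into_into f_inv_into_f)
      then show ?thesis using H[of x "inv_into A' g (g x)"] that A'A
        by (auto simp: A'_def doubleton_eq_iff)
    qed
    then show ?thesis by (auto simp: image_iff)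
  qed
  have "card (f ` A') \<le> card (g ` A')" unfolding eq by (rule card_image_le) (use fin A'A finite_subset in blast)
  also have "\<dots> \<le> card (g ` A)" using A'A fin by (intro card_mono) auto
  finally have c: "card (f ` A') \<le> card (g ` A)" .
  have "f ` A \<subseteq> insert p (f ` A')" by (auto simp: A'_def)
  then have "card (f ` A) \<le> card (insert p (f ` A'))" using fin A'A by (intro card_mono) (auto intro: finite_subset)
  also have "\<dots> \<le> card (f ` A') + 1"
    by (simp add: card_insert_le_m1 card_insert_if)
  finally show ?thesis using c by linarith
qed

lemma comp_bound: "finite E \<Longrightarrow> n \<le> card E + num_comp n E"
proof (induction E rule: finite_induct)
  case empty
  have "reach_rel n {} = Restr Id {0..<n}" by (simp add: reach_rel_def adj_rel_def)
  then have "{0..<n} // reach_rel n {} = (\<lambda>x. {x}) ` {0..<n}"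
    by (auto simp: quot_img)
  then have "num_comp n {} = n" by (simp add: num_comp_def card_image)
  then show ?case by simp
next
  case (insert e E)
  obtain a b where ab: "adj_rel (insert e E) \<subseteq> adj_rel E \<union> {(a,b),(b,a)}"
    using adj_insert_sub by blast
  define V where "V = {0..<n::nat}"
  define S where "S = (adj_rel E)\<^sup>*"
  define S' where "S' = (adj_rel (insert e E))\<^sup>*"
  define f where "f = (\<lambda>x. reach_rel n E `` {x})"
  define g where "g = (\<lambda>x. reach_rel n (insert e E) `` {x})"
  have symS: "sym S" unfolding S_def by (simp add: adj_sym sym_rtrancl)
  have transS: "trans S" unfolding S_def by (simp add: trans_rtrancl)
  have fx: "x \<in> V \<Longrightarrow> f x = {z\<in>V. (x,z) \<in> S}" for x
    by (auto simp: f_def reach_rel_def S_def V_def)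
  have gx: "x \<in> V \<Longrightarrow> g x = {z\<in>V. (x,z) \<in> S'}" for x
    by (auto simp: g_def reach_rel_def S'_def V_def)
  have fa: "(x,y) \<in> S \<Longrightarrow> {z\<in>V. (x,z) \<in> S} = {z\<in>V. (y,z) \<in> S}" for x y
    using symS transS by (auto dest: symD transD)
  have key: "f x = f y \<or> {f x, f y} = {{z\<in>V. (a,z) \<in> S}, {z\<in>V. (b,z) \<in> S}}"
    if xy: "x \<in> V" "y \<in> V" "g x = g y" for x y
  proof -
    have "y \<in> g y" using xy by (simp add: gx S'_def)
    then have "(x,y) \<in> S'" using xy gx by auto
    then have "(x,y) \<in> (adj_rel E \<union> {(a,b),(b,a)})\<^sup>*"
      unfolding S'_def using ab rtrancl_mono by blast
    then have "(x,y) \<in> S \<or> ((x,a) \<in> S \<and> (b,y) \<in> S) \<or> ((x,b) \<in> S \<and> (a,y) \<in> S)"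
      unfolding S_def by (rule path_split[OF adj_sym])
    then show ?thesis
    proof (elim disjE conjE)
      assume "(x,y) \<in> S" then show ?thesis using fa xy fx by auto
    next
      assume "(x,a) \<in> S" "(b,y) \<in> S"
      then have "f x = {z\<in>V. (a,z) \<in> S}" "f y = {z\<in>V. (b,z) \<in> S}"
        using fa xy fx symS by (auto dest: symD)
      then show ?thesis by auto
    next
      assume "(x,b) \<in> S" "(a,y) \<in> S"
      then have "f x = {z\<in>V. (b,z) \<in> S}" "f y = {z\<in>V. (a,z) \<in> S}"
        using fa xy fx symS by (auto dest: symD)
      then show ?thesis by auto
    qed
  qed
  have "card (f ` V) \<le> card (g ` V) + 1"
    by (rule card_merge[where p="{z\<in>V. (a,z) \<in> S}" and q="{z\<in>V. (b,z) \<in> S}"]) (use key V_def in auto)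
  then have "num_comp n E \<le> num_comp n (insert e E) + 1"
    by (simp add: num_comp_def quot_img f_def g_def V_def)
  then show ?case using insert by simp
qed

lemma num_comp_pos: "n \<ge> 1 \<Longrightarrow> num_comp n E \<ge> 1"
  unfolding num_comp_def quot_img
  by (simp add: Suc_le_eq card_gt_0_iff)

lemma num_comp_le: "num_comp n E \<le> n"
  unfolding num_comp_def quot_img using card_image_le[of "{0..<n}"] by simp

lemma Cnm_n: "G \<in> Cnm n m \<Longrightarrow> n \<ge> 1"
  by (cases n) (auto simp: Cnm_def connected_graph_def num_comp_def quot_img)

lemma Cnm_fin: "G \<in> Cnm n m \<Longrightarrow> finite G"
proof -
  assume "G \<in> Cnm n m"
  then have G: "G \<subseteq> {{u, v} | u v. u < n \<and> v < n \<and> u \<noteq> v}" by (simp add: Cnm_def simple_graph_def)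
  have "{{u, v} | u v. u < n \<and> v < n \<and> u \<noteq> v} \<subseteq> (\<lambda>(u,v). {u,v}) ` ({0..<n} \<times> {0..<n})"
  proof
    fix e assume "e \<in> {{u, v} | u v. u < n \<and> v < n \<and> u \<noteq> v}"
    then obtain u v where "e = {u,v}" "u < n" "v < n" by blast
    then show "e \<in> (\<lambda>(u,v). {u,v}) ` ({0..<n} \<times> {0..<n})" by force
  qed
  with G show ?thesis by (rule finite_subset[OF subset_trans]) auto
qed

lemma conn_card: "finite H \<Longrightarrow> connected_graph n H \<Longrightarrow> card H + 1 \<ge> n"
  using comp_bound[of H n] by (simp add: connected_graph_def)

lemma coeff_whitney:
  assumes G: "G \<in> Cnm n m"
  shows "coeff (coeff (whitney n G) 0) j = real (Nconn n G (j + n - 1))"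
proof -
  have n1: "n \<ge> 1" using Cnm_n[OF G] .
  have fin: "finite G" using Cnm_fin[OF G] .
  have gG: "grank n G = n - 1" using G by (simp add: Cnm_def connected_graph_def grank_def)
  have "coeff (coeff (whitney n G) 0) j =
      (\<Sum>H\<in>Pow G. if grank n G - grank n H = 0 \<and> gcorank n H = j then 1 else 0)"
  proof -
    have "coeff (whitney n G) 0 = (\<Sum>H\<in>Pow G. if grank n G - grank n H = 0 then monom 1 (gcorank n H) else 0)"
      unfolding whitney_def coeff_sum by (intro sum.cong) (auto simp: coeff_monom)
    then have "coeff (coeff (whitney n G) 0) j = (\<Sum>H\<in>Pow G. coeff (if grank n G - grank n H = 0 then monom 1 (gcorank n H) else 0) j)"
      by (simp add: coeff_sum)
    also have "\<dots> = (\<Sum>H\<in>Pow G. if grank n G - grank n H = 0 \<and> gcorank n H = j then 1 else 0)"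
      by (intro sum.cong) (auto simp: coeff_monom)
    finally show ?thesis .
  qed
  also have "\<dots> = real (card {H\<in>Pow G. grank n G - grank n H = 0 \<and> gcorank n H = j})"
    using fin by (simp add: sum.If_cases) (intro arg_cong[where f=card], auto)
  also have "{H\<in>Pow G. grank n G - grank n H = 0 \<and> gcorank n H = j} =
      {H. H \<subseteq> G \<and> card H = j + n - 1 \<and> connected_graph n H}"
  proof (intro set_eqI iffI)
    fix H assume "H \<in> {H\<in>Pow G. grank n G - grank n H = 0 \<and> gcorank n H = j}"
    then have H: "H \<subseteq> G" "grank n G - grank n H = 0" "gcorank n H = j" by auto
    have fH: "finite H" using H(1) fin finite_subset by blast
    have "num_comp n H \<ge> 1" using num_comp_pos[OF n1] .
    then have c: "num_comp n H = 1" using H(2) gG n1 num_comp_le[of n H] by (simp add: grank_def)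
    then have cg: "connected_graph n H" by (simp add: connected_graph_def)
    have "card H + 1 \<ge> n" using conn_card[OF fH cg] .
    then have "card H = j + n - 1" using H(3) c by (simp add: gcorank_def)
    then show "H \<in> {H. H \<subseteq> G \<and> card H = j + n - 1 \<and> connected_graph n H}" using H cg by auto
  next
    fix H assume "H \<in> {H. H \<subseteq> G \<and> card H = j + n - 1 \<and> connected_graph n H}"
    then show "H \<in> {H\<in>Pow G. grank n G - grank n H = 0 \<and> gcorank n H = j}"
      using gG n1 by (auto simp: connected_graph_def grank_def gcorank_def)
  qed
  finally show ?thesis by (simp add: Nconn_def)
qed

lemma Nconn_small:
  assumes G: "G \<in> Cnm n m" and i: "i + 1 < n"
  shows "Nconn n G i = 0"
proof -
  have fin: "finite G" using Cnm_fin[OF G] .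
  have e: "{H. H \<subseteq> G \<and> card H = i \<and> connected_graph n H} = {}"
  proof (rule equals0I)
    fix H assume "H \<in> {H. H \<subseteq> G \<and> card H = i \<and> connected_graph n H}"
    then have h: "H \<subseteq> G" "card H = i" "connected_graph n H" by auto
    have "finite H" using h(1) fin by (rule finite_subset)
    then have "card H + 1 \<ge> n" using conn_card h(3) by blast
    then show False using h(2) i by simp
  qed
  show ?thesis unfolding Nconn_def e by simp
qed

lemma wmax_zero:
  assumes W: "whitney_maximum n m W" and H: "H \<in> Cnm n m"
  shows "Nconn n H i \<le> Nconn n W i"
proof (cases "i + 1 < n")
  case True then show ?thesis using Nconn_small[OF H] by simp
next
  case False
  have WC: "W \<in> Cnm n m" using W by (simp add: whitney_maximum_def)
  obtain Q where Q: "nonneg_poly2 Q" "whitney n W - whitney n H = one_minus_xy * Q"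
    using W H by (auto simp: whitney_maximum_def)
  have c0: "coeff one_minus_xy 0 = 1" by (simp add: one_minus_xy_def coeff_monom)
  define j where "j = i + 1 - n"
  have ij: "i = j + n - 1" using False j_def by simp
  have "coeff (coeff (whitney n W) 0) j - coeff (coeff (whitney n H) 0) j = coeff (coeff Q 0) j"
    using arg_cong[OF Q(2), of "\<lambda>P. coeff (coeff P 0) j"] by (simp add: coeff_mult_0 c0)
  moreover have "coeff (coeff Q 0) j \<ge> 0" using Q(1) by (simp add: nonneg_poly2_def)
  ultimately show ?thesis using coeff_whitney[OF WC, of j] coeff_whitney[OF H, of j] ij by simp
qed

theorem mainTheorem8:
  fixes n m :: nat
  assumes "\<exists>W. whitney_maximum n m W"
  shows "\<forall>G. uniformly_most_reliable n m G \<longrightarrow> zero_element n m G"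
proof (intro allI impI)
  fix G assume U: "uniformly_most_reliable n m G"
  obtain W where W: "whitney_maximum n m W" using assms by blast
  have WC: "W \<in> Cnm n m" using W by (simp add: whitney_maximum_def)
  have GC: "G \<in> Cnm n m" using U by (simp add: uniformly_most_reliable_def)
  have cW: "card W = m" and cG: "card G = m" using WC GC by (auto simp: Cnm_def)
  have le: "Nconn n G i \<le> Nconn n W i" for i using wmax_zero[OF W GC] .
  have "rel1 n G (1/2) \<ge> rel1 n W (1/2)" using U WC by (auto simp: uniformly_most_reliable_def)
  then have "(\<Sum>i=0..m. (real (Nconn n W i) - real (Nconn n G i)) * (1/2) ^ i * (1/2) ^ (m - i)) \<le> 0"
    by (simp add: rel1_def cW cG algebra_simps sum_subtractf)
  moreover have "\<forall>i\<in>{0..m}. (real (Nconn n W i) - real (Nconn n G i)) * (1/2) ^ i * (1/2) ^ (m - i) \<ge> 0"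
    using le by simp
  ultimately have z: "\<forall>i\<in>{0..m}. (real (Nconn n W i) - real (Nconn n G i)) * (1/2) ^ i * (1/2) ^ (m - i) = 0"
  proof -
    assume a: "(\<Sum>i=0..m. (real (Nconn n W i) - real (Nconn n G i)) * (1/2) ^ i * (1/2) ^ (m - i)) \<le> 0"
      and b: "\<forall>i\<in>{0..m}. (real (Nconn n W i) - real (Nconn n G i)) * (1/2) ^ i * (1/2) ^ (m - i) \<ge> 0"
    have "(\<Sum>i=0..m. (real (Nconn n W i) - real (Nconn n G i)) * (1/2) ^ i * (1/2) ^ (m - i)) \<ge> 0"
      using b by (intro sum_nonneg) auto
    with a have "(\<Sum>i=0..m. (real (Nconn n W i) - real (Nconn n G i)) * (1/2) ^ i * (1/2) ^ (m - i)) = 0"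
      by linarith
    then show ?thesis using b by (subst (asm) sum_nonneg_eq_0_iff) auto
  qed
  have eq: "Nconn n W i = Nconn n G i" if "i \<in> {0..m}" for i
  proof -
    have "(real (Nconn n W i) - real (Nconn n G i)) * (1/2) ^ i * (1/2) ^ (m - i) = 0"
      using z that by blast
    then show ?thesis by simp
  qed
  have "Nconn n H i \<le> Nconn n G i" if "H \<in> Cnm n m" "i \<in> {0..m}" for H i
    using wmax_zero[OF W that(1), of i] eq[OF that(2)] by simp
  then show "zero_element n m G"
    unfolding zero_element_def using GC by blast
qed

end
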